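(* The rational map $\mathbb{P}^2 \dashrightarrow \mathbb{P}^3$, $(r:s:t) \mapsto (w:x:y:z)$ with \[ (w:x:y:z) = (r^3 - s^3 : s^3 + t^3 : r^2s - s^2t + t^2r : r^2t - s^2r - t^2s), \] defined over $\mathbb{Q}$, is a birational map from $\mathbb{P}^2$ onto the cubic surface $S_3: wx(w+x) = y^3 + z^3$. Moreover, for this parametrization $wx(w+x)$, as a homogeneous polynomial of degree $9$ in $r,s,t$, factors over $\mathbb{Q}$ as a product of three linear and three quadratic factors.
   Context: No additional context. *)

theory Defs
  imports Complex_Main
begin

definition hpoly3 :: "nat \<Rightarrow> (nat \<Rightarrow> nat \<Rightarrow> nat \<Rightarrow> rat) \<Rightarrow> complex \<Rightarrow> complex \<Rightarrow> complex \<Rightarrow> complex" where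
  "hpoly3 d c r s t =
     (\<Sum>(i,j,k) \<in> {(i,j,k). i + j + k = d}. of_rat (c i j k) * r ^ i * s ^ j * t ^ k)"

definition hpoly4 :: "nat \<Rightarrow> (nat \<Rightarrow> nat \<Rightarrow> nat \<Rightarrow> nat \<Rightarrow> rat) \<Rightarrow> complex \<Rightarrow> complex \<Rightarrow> complex \<Rightarrow> complex \<Rightarrow> complex" where
  "hpoly4 d c w x y z =
     (\<Sum>(i,j,k,l) \<in> {(i,j,k,l). i + j + k + l = d}.
        of_rat (c i j k l) * w ^ i * x ^ j * y ^ k * z ^ l)"

definition phiW :: "complex \<Rightarrow> complex \<Rightarrow> complex \<Rightarrow> complex" where
  "phiW r s t = r^3 - s^3"
definition phiX :: "complex \<Rightarrow> complex \<Rightarrow> complex \<Rightarrow> complex" where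
  "phiX r s t = s^3 + t^3"
definition phiY :: "complex \<Rightarrow> complex \<Rightarrow> complex \<Rightarrow> complex" where
  "phiY r s t = r^2*s - s^2*t + t^2*r"
definition phiZ :: "complex \<Rightarrow> complex \<Rightarrow> complex \<Rightarrow> complex" where
  "phiZ r s t = r^2*t - s^2*r - t^2*s"

text \<open>The cubic surface S_3 : wx(w+x) = y^3 + z^3 (complex points of the affine cone).\<close>

definition onS3 :: "complex \<Rightarrow> complex \<Rightarrow> complex \<Rightarrow> complex \<Rightarrow> bool" where
  "onS3 w x y z \<longleftrightarrow> w * x * (w + x) = y^3 + z^3"

definition proportional3 :: "complex \<Rightarrow> complex \<Rightarrow> complex \<Rightarrow> complex \<Rightarrow> complex \<Rightarrow> complex \<Rightarrow> bool" where
  "proportional3 a b c a' b' c' \<longleftrightarrow> a*b' = b*a' \<and> a*c' = c*a' \<and> b*c' = c*b'"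

definition proportional4 :: "complex \<Rightarrow> complex \<Rightarrow> complex \<Rightarrow> complex \<Rightarrow>
     complex \<Rightarrow> complex \<Rightarrow> complex \<Rightarrow> complex \<Rightarrow> bool" where
  "proportional4 a b c d a' b' c' d' \<longleftrightarrow>
     a*b' = b*a' \<and> a*c' = c*a' \<and> a*d' = d*a' \<and> b*c' = c*b' \<and> b*d' = d*b' \<and> c*d' = d*c'"

text \<open>Birationality of the map phi from P^2 onto S_3, defined over Q: phi maps into S_3,
and there is a rational map psi : S_3 --> P^2 given by homogeneous forms A, B, C over Q of
a common degree d such that psi o phi = id (as rational maps of P^2) and
phi o psi = id (as rational maps of S_3). Since P^2 and S_3 are irreducible, the
compositions being the identity on a dense open set is equivalent to the vanishing of the
minors everywhere together with the compositions being defined somewhere.\<close>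

definition phi_birational_onto_S3 :: bool where
  "phi_birational_onto_S3 \<longleftrightarrow>
     (\<forall>r s t. onS3 (phiW r s t) (phiX r s t) (phiY r s t) (phiZ r s t)) \<and>
     (\<exists>d cA cB cC.
        let A = hpoly4 d cA; B = hpoly4 d cB; C = hpoly4 d cC in
        (\<forall>r s t. proportional3
            (A (phiW r s t) (phiX r s t) (phiY r s t) (phiZ r s t))
            (B (phiW r s t) (phiX r s t) (phiY r s t) (phiZ r s t))
            (C (phiW r s t) (phiX r s t) (phiY r s t) (phiZ r s t)) r s t) \<and>
        (\<exists>r s t. (A (phiW r s t) (phiX r s t) (phiY r s t) (phiZ r s t),
                  B (phiW r s t) (phiX r s t) (phiY r s t) (phiZ r s t),
                  C (phiW r s t) (phiX r s t) (phiY r s t) (phiZ r s t)) \<noteq> (0, 0, 0)) \<and>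
        (\<forall>w x y z. onS3 w x y z \<longrightarrow>
           proportional4
             (phiW (A w x y z) (B w x y z) (C w x y z))
             (phiX (A w x y z) (B w x y z) (C w x y z))
             (phiY (A w x y z) (B w x y z) (C w x y z))
             (phiZ (A w x y z) (B w x y z) (C w x y z)) w x y z) \<and>
        (\<exists>w x y z. onS3 w x y z \<and>
           (phiW (A w x y z) (B w x y z) (C w x y z),
            phiX (A w x y z) (B w x y z) (C w x y z),
            phiY (A w x y z) (B w x y z) (C w x y z),
            phiZ (A w x y z) (B w x y z) (C w x y z)) \<noteq> (0, 0, 0, 0)))"

definition irreducible_quadratic_Q :: "(nat \<Rightarrow> nat \<Rightarrow> nat \<Rightarrow> rat) \<Rightarrow> bool" where
  "irreducible_quadratic_Q q \<longleftrightarrow>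
     \<not> (\<exists>l1 l2. \<forall>r s t. hpoly3 2 q r s t = hpoly3 1 l1 r s t * hpoly3 1 l2 r s t)"

end

theory Submission imports Defs begin

lemma m_set4_2: "i+j+k+l = (2::nat) \<Longrightarrow> (i,j,k,l) \<in> {(2,0,0,0),(0,2,0,0),(0,0,2,0),(0,0,0,2),(1,1,0,0),(1,0,1,0),(1,0,0,1),(0,1,1,0),(0,1,0,1),(0,0,1,1)}"
  by simp presburger

lemma set4_2: "{(i,j,k,l). i + j + k + l = (2::nat)} = {(2,0,0,0),(0,2,0,0),(0,0,2,0),(0,0,0,2),(1,1,0,0),(1,0,1,0),(1,0,0,1),(0,1,1,0),(0,1,0,1),(0,0,1,1)}"
proof
  show "{(2,0,0,0),(0,2,0,0),(0,0,2,0),(0,0,0,2),(1,1,0,0),(1,0,1,0),(1,0,0,1),(0,1,1,0),(0,1,0,1),(0,0,1,1)} \<subseteq> {(i,j,k,l). i + j + k + l = (2::nat)}" by simp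
  show "{(i,j,k,l). i + j + k + l = (2::nat)} \<subseteq> {(2,0,0,0),(0,2,0,0),(0,0,2,0),(0,0,0,2),(1,1,0,0),(1,0,1,0),(1,0,0,1),(0,1,1,0),(0,1,0,1),(0,0,1,1)}"
  proof (rule subsetI)
    fix p assume "p \<in> {(i,j,k,l). i + j + k + l = (2::nat)}"
    then obtain i j k l where "p = (i,j,k,l)" "i+j+k+l=2" by blast
    then show "p \<in> {(2,0,0,0),(0,2,0,0),(0,0,2,0),(0,0,0,2),(1,1,0,0),(1,0,1,0),(1,0,0,1),(0,1,1,0),(0,1,0,1),(0,0,1,1)}" using m_set4_2 by metis
  qed
qed

lemma m_set3_2: "i+j+k = (2::nat) \<Longrightarrow> (i,j,k) \<in> {(2,0,0),(0,2,0),(0,0,2),(1,1,0),(1,0,1),(0,1,1)}"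
  by simp presburger

lemma set3_2: "{(i,j,k). i + j + k = (2::nat)} = {(2,0,0),(0,2,0),(0,0,2),(1,1,0),(1,0,1),(0,1,1)}"
proof
  show "{(2,0,0),(0,2,0),(0,0,2),(1,1,0),(1,0,1),(0,1,1)} \<subseteq> {(i,j,k). i + j + k = (2::nat)}" by simp
  show "{(i,j,k). i + j + k = (2::nat)} \<subseteq> {(2,0,0),(0,2,0),(0,0,2),(1,1,0),(1,0,1),(0,1,1)}"
  proof (rule subsetI)
    fix p assume "p \<in> {(i,j,k). i + j + k = (2::nat)}"
    then obtain i j k where "p = (i,j,k)" "i+j+k=2" by blast
    then show "p \<in> {(2,0,0),(0,2,0),(0,0,2),(1,1,0),(1,0,1),(0,1,1)}" using m_set3_2 by metis
  qed
qed

lemma m_set3_1: "i+j+k = (1::nat) \<Longrightarrow> (i,j,k) \<in> {(1,0,0),(0,1,0),(0,0,1)}"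
  by simp presburger

lemma set3_1: "{(i,j,k). i + j + k = (1::nat)} = {(1,0,0),(0,1,0),(0,0,1)}"
proof
  show "{(1,0,0),(0,1,0),(0,0,1)} \<subseteq> {(i,j,k). i + j + k = (1::nat)}" by simp
  show "{(i,j,k). i + j + k = (1::nat)} \<subseteq> {(1,0,0),(0,1,0),(0,0,1)}"
  proof (rule subsetI)
    fix p assume "p \<in> {(i,j,k). i + j + k = (1::nat)}"
    then obtain i j k where "p = (i,j,k)" "i+j+k=1" by blast
    then show "p \<in> {(1,0,0),(0,1,0),(0,0,1)}" using m_set3_1 by metis
  qed
qed

lemma hpoly4_2: "hpoly4 2 c w x y z =
  of_rat (c 2 0 0 0) * w^2 + of_rat (c 0 2 0 0) * x^2 + of_rat (c 0 0 2 0) * y^2 + of_rat (c 0 0 0 2) * z^2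
  + of_rat (c 1 1 0 0) * w * x + of_rat (c 1 0 1 0) * w * y + of_rat (c 1 0 0 1) * w * z
  + of_rat (c 0 1 1 0) * x * y + of_rat (c 0 1 0 1) * x * z + of_rat (c 0 0 1 1) * y * z"
  unfolding hpoly4_def set4_2 by (simp add: algebra_simps)

lemma hpoly3_1: "hpoly3 1 c r s t = of_rat (c 1 0 0) * r + of_rat (c 0 1 0) * s + of_rat (c 0 0 1) * t"
  unfolding hpoly3_def set3_1 by (simp add: algebra_simps)

lemma hpoly3_2: "hpoly3 2 c r s t =
  of_rat (c 2 0 0) * r^2 + of_rat (c 0 2 0) * s^2 + of_rat (c 0 0 2) * t^2
  + of_rat (c 1 1 0) * r * s + of_rat (c 1 0 1) * r * t + of_rat (c 0 1 1) * s * t"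
  unfolding hpoly3_def set3_2 by (simp add: algebra_simps)

lemma quad_aux:
  fixes a b c d e :: rat
  assumes e: "e^2 < 4"
    and H: "\<And>u::complex. (of_rat a*u+of_rat b)*(of_rat c*u+of_rat d) = u^2 + of_rat e*u + 1"
  shows False
proof -
  have pos: "q^2 + e*q + 1 > 0" for q :: rat
  proof -
    have "q^2 + e*q + 1 = (q + e/2)^2 + (1 - e^2/4)" by (simp add: power2_eq_square field_simps)
    moreover have "(q + e/2)^2 \<ge> 0" by simp
    moreover have "1 - e^2/4 > 0" using e by simp
    ultimately show ?thesis by linarith
  qed
  have Hq: "(a*q+b)*(c*q+d) = q^2 + e*q + 1" for q
  proof -
    have "(of_rat ((a*q+b)*(c*q+d)) :: complex) = of_rat (q^2 + e*q + 1)"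
      using H[of "of_rat q"] by (simp add: of_rat_add of_rat_mult of_rat_power)
    then show ?thesis by (simp only: of_rat_eq_iff)
  qed
  show False
  proof (cases "a = 0")
    case False
    have "a*(-b/a)+b = 0" using False by simp
    then have "(-b/a)^2 + e*(-b/a) + 1 = 0" using Hq[of "-b/a"] by simp
    then show False using pos[of "-b/a"] by linarith
  next
    case a: True
    show False
    proof (cases "c = 0")
      case False
      have "c*(-d/c)+d = 0" using False by simp
      then have "(-d/c)^2 + e*(-d/c) + 1 = 0" using Hq[of "-d/c"] by simp
      then show False using pos[of "-d/c"] by linarith
    next
      case True
      then show False using Hq[of 1] Hq[of "-1"] Hq[of 0] a by simp
    qed
  qed
qed

lemma irr1: "irreducible_quadratic_Q (\<lambda>i j k. if (i,j,k) \<in> {(2,0,0),(1,1,0),(0,2,0)} then 1 else 0)"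
  unfolding irreducible_quadratic_Q_def
proof
  assume "\<exists>l1 l2. \<forall>r s t. hpoly3 2 (\<lambda>i j k. if (i,j,k) \<in> {(2,0,0),(1,1,0),(0,2,0)} then 1 else 0) r s t = hpoly3 1 l1 r s t * hpoly3 1 l2 r s t"
  then obtain l1 l2 where h: "\<And>r s t. hpoly3 2 (\<lambda>i j k. if (i,j,k) \<in> {(2,0,0),(1,1,0),(0,2,0)} then 1 else 0) r s t = hpoly3 1 l1 r s t * hpoly3 1 l2 r s t" by blast
  show False
  proof (rule quad_aux[of 1 "l1 1 0 0" "l1 0 1 0" "l2 1 0 0" "l2 0 1 0"])
    fix u :: complex
    show "(of_rat (l1 1 0 0)*u+of_rat (l1 0 1 0))*(of_rat (l2 1 0 0)*u+of_rat (l2 0 1 0)) = u^2 + of_rat 1*u + 1"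
      using h[of u 1 0] unfolding hpoly3_1 hpoly3_2 by (simp add: algebra_simps)
  qed simp
qed

lemma irr2: "irreducible_quadratic_Q (\<lambda>i j k. if (i,j,k) = (0,1,1) then -1 else if (i,j,k) \<in> {(0,2,0),(0,0,2)} then 1 else 0)"
  unfolding irreducible_quadratic_Q_def
proof
  assume "\<exists>l1 l2. \<forall>r s t. hpoly3 2 (\<lambda>i j k. if (i,j,k) = (0,1,1) then -1 else if (i,j,k) \<in> {(0,2,0),(0,0,2)} then 1 else 0) r s t = hpoly3 1 l1 r s t * hpoly3 1 l2 r s t"
  then obtain l1 l2 where h: "\<And>r s t. hpoly3 2 (\<lambda>i j k. if (i,j,k) = (0,1,1) then -1 else if (i,j,k) \<in> {(0,2,0),(0,0,2)} then 1 else 0) r s t = hpoly3 1 l1 r s t * hpoly3 1 l2 r s t" by blast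
  show False
  proof (rule quad_aux[of "-1" "l1 0 0 1" "l1 0 1 0" "l2 0 0 1" "l2 0 1 0"])
    fix u :: complex
    show "(of_rat (l1 0 0 1)*u+of_rat (l1 0 1 0))*(of_rat (l2 0 0 1)*u+of_rat (l2 0 1 0)) = u^2 + of_rat (-1)*u + 1"
      using h[of 0 1 u] unfolding hpoly3_1 hpoly3_2 by (simp add: algebra_simps)
  qed simp
qed

lemma irr3: "irreducible_quadratic_Q (\<lambda>i j k. if (i,j,k) = (1,0,1) then -1 else if (i,j,k) \<in> {(2,0,0),(0,0,2)} then 1 else 0)"
  unfolding irreducible_quadratic_Q_def
proof
  assume "\<exists>l1 l2. \<forall>r s t. hpoly3 2 (\<lambda>i j k. if (i,j,k) = (1,0,1) then -1 else if (i,j,k) \<in> {(2,0,0),(0,0,2)} then 1 else 0) r s t = hpoly3 1 l1 r s t * hpoly3 1 l2 r s t"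
  then obtain l1 l2 where h: "\<And>r s t. hpoly3 2 (\<lambda>i j k. if (i,j,k) = (1,0,1) then -1 else if (i,j,k) \<in> {(2,0,0),(0,0,2)} then 1 else 0) r s t = hpoly3 1 l1 r s t * hpoly3 1 l2 r s t" by blast
  show False
  proof (rule quad_aux[of "-1" "l1 1 0 0" "l1 0 0 1" "l2 1 0 0" "l2 0 0 1"])
    fix u :: complex
    show "(of_rat (l1 1 0 0)*u+of_rat (l1 0 0 1))*(of_rat (l2 1 0 0)*u+of_rat (l2 0 0 1)) = u^2 + of_rat (-1)*u + 1"
      using h[of u 0 1] unfolding hpoly3_1 hpoly3_2 by (simp add: algebra_simps)
  qed simp
qed

lemma onS3_phi: "onS3 (phiW r s t) (phiX r s t) (phiY r s t) (phiZ r s t)"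
  unfolding onS3_def phiW_def phiX_def phiY_def phiZ_def by algebra

lemma factorization: "phiW r s t * phiX r s t * (phiW r s t + phiX r s t) =
          hpoly3 1 (\<lambda>i j k. if (i,j,k)=(1,0,0) then 1 else if (i,j,k)=(0,1,0) then -1 else 0) r s t
        * hpoly3 1 (\<lambda>i j k. if (i,j,k) \<in> {(0,1,0),(0,0,1)} then 1 else 0) r s t
        * hpoly3 1 (\<lambda>i j k. if (i,j,k) \<in> {(1,0,0),(0,0,1)} then 1 else 0) r s t
        * hpoly3 2 (\<lambda>i j k. if (i,j,k) \<in> {(2,0,0),(1,1,0),(0,2,0)} then 1 else 0) r s t
        * hpoly3 2 (\<lambda>i j k. if (i,j,k) = (0,1,1) then -1 else if (i,j,k) \<in> {(0,2,0),(0,0,2)} then 1 else 0) r s t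
        * hpoly3 2 (\<lambda>i j k. if (i,j,k) = (1,0,1) then -1 else if (i,j,k) \<in> {(2,0,0),(0,0,2)} then 1 else 0) r s t"
  unfolding hpoly3_1 hpoly3_2 phiW_def phiX_def by simp algebra

definition "cA = (\<lambda>i j k l. if (i,j,k,l) = (0,0,2,0) then 1 else if (i,j,k,l) = (1,0,0,1) then -1 else (0::rat))"
definition "cB = (\<lambda>i j k l. if (i,j,k,l) = (1,1,0,0) then 1 else if (i,j,k,l) = (0,0,1,1) then -1 else (0::rat))"
definition "cC = (\<lambda>i j k l. if (i,j,k,l) = (0,1,1,0) then 1 else if (i,j,k,l) = (0,0,0,2) then -1 else (0::rat))"

lemma cA_eval: "hpoly4 2 cA w x y z = y^2 - w*z"
  unfolding hpoly4_2 cA_def by simp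
lemma cB_eval: "hpoly4 2 cB w x y z = w*x - y*z"
  unfolding hpoly4_2 cB_def by simp
lemma cC_eval: "hpoly4 2 cC w x y z = x*y - z^2"
  unfolding hpoly4_2 cC_def by simp

lemma phiL:
  "(phiY r s t)^2 - phiW r s t * phiZ r s t = r * (-2*s^2*t^3 - s^5 + r*t^4 - r*s^3*t + 3*r^2*s*t^2 + 2*r^3*s^2 - r^4*t)"
  "phiW r s t * phiX r s t - phiY r s t * phiZ r s t = s * (-2*s^2*t^3 - s^5 + r*t^4 - r*s^3*t + 3*r^2*s*t^2 + 2*r^3*s^2 - r^4*t)"
  "phiX r s t * phiY r s t - (phiZ r s t)^2 = t * (-2*s^2*t^3 - s^5 + r*t^4 - r*s^3*t + 3*r^2*s*t^2 + 2*r^3*s^2 - r^4*t)"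
  unfolding phiW_def phiX_def phiY_def phiZ_def by algebra+

lemma back1: "proportional3 (A r s t) (B r s t) (C r s t) r s t"
  if "A = (\<lambda>r s t. hpoly4 2 cA (phiW r s t) (phiX r s t) (phiY r s t) (phiZ r s t))"
     "B = (\<lambda>r s t. hpoly4 2 cB (phiW r s t) (phiX r s t) (phiY r s t) (phiZ r s t))"
     "C = (\<lambda>r s t. hpoly4 2 cC (phiW r s t) (phiX r s t) (phiY r s t) (phiZ r s t))"
  for A B C :: "complex \<Rightarrow> complex \<Rightarrow> complex \<Rightarrow> complex" and r s t
  unfolding that proportional3_def cA_eval cB_eval cC_eval phiL
  by (simp add: ac_simps)

lemma minor_aux: "a - b = F * G \<Longrightarrow> F = 0 \<Longrightarrow> (a::complex) = b"
  by simp

lemma fwd1: "onS3 w x y z \<Longrightarrow> proportional4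
             (phiW (y^2 - w*z) (w*x - y*z) (x*y - z^2))
             (phiX (y^2 - w*z) (w*x - y*z) (x*y - z^2))
             (phiY (y^2 - w*z) (w*x - y*z) (x*y - z^2))
             (phiZ (y^2 - w*z) (w*x - y*z) (x*y - z^2)) w x y z"
proof -
  assume h: "onS3 w x y z"
  have F: "w*x*(w+x) - y^3 - z^3 = 0" using h unfolding onS3_def by simp
  let ?a = "y^2 - w*z" and ?b = "w*x - y*z" and ?c = "x*y - z^2"
  let ?P0 = "phiW ?a ?b ?c" and ?P1 = "phiX ?a ?b ?c" and ?P2 = "phiY ?a ?b ?c" and ?P3 = "phiZ ?a ?b ?c"
  have e0: "?P0 * x = ?P1 * w"
    by (rule minor_aux[OF _ F, of _ _ "0 - x*y^3 - w*z^3 + 3*w*x*y*z - w^2*x^2"]) (unfold phiW_def phiX_def phiY_def phiZ_def, algebra)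
  have e1: "?P0 * y = ?P2 * w"
    by (rule minor_aux[OF _ F, of _ _ "0 - y^4 + 2*w*y^2*z - w^2*z^2"]) (unfold phiW_def phiX_def phiY_def phiZ_def, algebra)
  have e2: "?P0 * z = ?P3 * w"
    by (rule minor_aux[OF _ F, of _ _ "0 - y^3*z + w*y*z^2 + w*x*y^2 - w^2*x*z"]) (unfold phiW_def phiX_def phiY_def phiZ_def, algebra)
  have e3: "?P1 * y = ?P2 * x"
    by (rule minor_aux[OF _ F, of _ _ "y*z^3 - x*y^2*z - w*x*z^2 + w*x^2*y"]) (unfold phiW_def phiX_def phiY_def phiZ_def, algebra)
  have e4: "?P1 * z = ?P3 * x"
    by (rule minor_aux[OF _ F, of _ _ "z^4 - 2*x*y*z^2 + x^2*y^2"]) (unfold phiW_def phiX_def phiY_def phiZ_def, algebra)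
  have e5: "?P2 * z = ?P3 * y"
    by (rule minor_aux[OF _ F, of _ _ "0 - y^2*z^2 + x*y^3 + w*z^3 - w*x*y*z"]) (unfold phiW_def phiX_def phiY_def phiZ_def, algebra)
  show ?thesis unfolding proportional4_def using e0 e1 e2 e3 e4 e5 by blast
qed

lemma part2:
  shows "let A = hpoly4 2 cA; B = hpoly4 2 cB; C = hpoly4 2 cC in
      (\<forall>r s t. proportional3
          (A (phiW r s t) (phiX r s t) (phiY r s t) (phiZ r s t))
          (B (phiW r s t) (phiX r s t) (phiY r s t) (phiZ r s t))
          (C (phiW r s t) (phiX r s t) (phiY r s t) (phiZ r s t)) r s t) \<and>
      (\<exists>r s t. (A (phiW r s t) (phiX r s t) (phiY r s t) (phiZ r s t),
                B (phiW r s t) (phiX r s t) (phiY r s t) (phiZ r s t),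
                C (phiW r s t) (phiX r s t) (phiY r s t) (phiZ r s t)) \<noteq> (0, 0, 0)) \<and>
      (\<forall>w x y z. onS3 w x y z \<longrightarrow>
         proportional4
           (phiW (A w x y z) (B w x y z) (C w x y z))
           (phiX (A w x y z) (B w x y z) (C w x y z))
           (phiY (A w x y z) (B w x y z) (C w x y z))
           (phiZ (A w x y z) (B w x y z) (C w x y z)) w x y z) \<and>
      (\<exists>w x y z. onS3 w x y z \<and>
         (phiW (A w x y z) (B w x y z) (C w x y z),
          phiX (A w x y z) (B w x y z) (C w x y z),
          phiY (A w x y z) (B w x y z) (C w x y z),
          phiZ (A w x y z) (B w x y z) (C w x y z)) \<noteq> (0, 0, 0, 0))"
  unfolding Let_def
proof (intro conjI allI impI)
  fix r s t
  show "proportional3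
          (hpoly4 2 cA (phiW r s t) (phiX r s t) (phiY r s t) (phiZ r s t))
          (hpoly4 2 cB (phiW r s t) (phiX r s t) (phiY r s t) (phiZ r s t))
          (hpoly4 2 cC (phiW r s t) (phiX r s t) (phiY r s t) (phiZ r s t)) r s t"
    by (rule back1[OF refl refl refl])
next
  fix w x y z :: complex assume "onS3 w x y z"
  then show "proportional4
           (phiW (hpoly4 2 cA w x y z) (hpoly4 2 cB w x y z) (hpoly4 2 cC w x y z))
           (phiX (hpoly4 2 cA w x y z) (hpoly4 2 cB w x y z) (hpoly4 2 cC w x y z))
           (phiY (hpoly4 2 cA w x y z) (hpoly4 2 cB w x y z) (hpoly4 2 cC w x y z))
           (phiZ (hpoly4 2 cA w x y z) (hpoly4 2 cB w x y z) (hpoly4 2 cC w x y z)) w x y z"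
    unfolding cA_eval cB_eval cC_eval by (rule fwd1)
next
  show "\<exists>r s t. (hpoly4 2 cA (phiW r s t) (phiX r s t) (phiY r s t) (phiZ r s t),
                hpoly4 2 cB (phiW r s t) (phiX r s t) (phiY r s t) (phiZ r s t),
                hpoly4 2 cC (phiW r s t) (phiX r s t) (phiY r s t) (phiZ r s t)) \<noteq> (0, 0, 0)"
    by (rule exI[of _ 2], rule exI[of _ 1], rule exI[of _ 0])
      (simp add: cA_eval cB_eval cC_eval phiW_def phiX_def phiY_def phiZ_def)
next
  show "\<exists>w x y z. onS3 w x y z \<and>
         (phiW (hpoly4 2 cA w x y z) (hpoly4 2 cB w x y z) (hpoly4 2 cC w x y z),
          phiX (hpoly4 2 cA w x y z) (hpoly4 2 cB w x y z) (hpoly4 2 cC w x y z),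
          phiY (hpoly4 2 cA w x y z) (hpoly4 2 cB w x y z) (hpoly4 2 cC w x y z),
          phiZ (hpoly4 2 cA w x y z) (hpoly4 2 cB w x y z) (hpoly4 2 cC w x y z)) \<noteq> (0, 0, 0, 0)"
    by (rule exI[of _ 7], rule exI[of _ 1], rule exI[of _ 4], rule exI[of _ "-2"])
      (simp add: onS3_def cA_eval cB_eval cC_eval phiW_def phiX_def phiY_def phiZ_def)
qed

lemma birat: phi_birational_onto_S3
  unfolding phi_birational_onto_S3_def
  apply (rule conjI)
   apply (intro allI onS3_phi)
  apply (rule exI[of _ 2], rule exI[of _ cA], rule exI[of _ cB], rule exI[of _ cC])
  apply (rule part2)
  done

theorem mainTheorem17:
  shows "phi_birational_onto_S3 \<and>
    (\<exists>l1 l2 l3 q1 q2 q3.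
       irreducible_quadratic_Q q1 \<and> irreducible_quadratic_Q q2 \<and> irreducible_quadratic_Q q3 \<and>
       (\<forall>r s t. phiW r s t * phiX r s t * (phiW r s t + phiX r s t) =
          hpoly3 1 l1 r s t * hpoly3 1 l2 r s t * hpoly3 1 l3 r s t *
          hpoly3 2 q1 r s t * hpoly3 2 q2 r s t * hpoly3 2 q3 r s t))"
  using birat irr1 irr2 irr3 factorization by blast

end
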